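(* Let $M$ be a real symmetric $n\times n$ matrix with $\mathrm{Trace}(M)\ge 0$, and write $\det(xI-M)=\sum_{k=0}^n a_kx^k$. Suppose $M$ has exactly one positive eigenvalue, $r-1$ negative eigenvalues and $n-r$ zero eigenvalues (counted with multiplicity), where $2\le r\le n$. If $\mathrm{Trace}(M)=0$, then $a_k<0$ for $n-r\le k\le n-2$; if $\mathrm{Trace}(M)>0$, then $a_k<0$ for $n-r\le k\le n-1$. *)

theory Defs
  imports "Jordan_Normal_Form.Char_Poly" "HOL-Computational_Algebra.Polynomial"
begin

definition mat_trace :: "'a::comm_ring_1 mat \<Rightarrow> 'a" where
  "mat_trace M = (\<Sum>i<dim_row M. M $$ (i, i))"

end

theory Submission
  imports Defs
begin

lemma coeff_lin_mult: "coeff ([:c, 1:] * (p::'a::comm_ring_1 poly)) k = c * coeff p k + (case k of 0 \<Rightarrow> 0 | Suc j \<Rightarrow> coeff p j)"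
  by (simp add: coeff_pCons split: nat.splits)

lemma prod_lin_coeff:
  fixes a :: "nat \<Rightarrow> 'a::comm_ring_1"
  shows "coeff (\<Prod>i=0..<Suc k. [:-a i, 1:]) k = - (\<Sum>i=0..<Suc k. a i)"
proof (induction k)
  case 0
  then show ?case by simp
next
  case (Suc k)
  have m: "coeff (\<Prod>i=0..<Suc k. [:-a i, 1:]) (Suc k) = 1"
    using degree_prod_monic[of "Suc k" "\<lambda>i. [:-a i, 1:]"] by simp
  have "(\<Prod>i=0..<Suc (Suc k). [:-a i, 1:]) = [:-a (Suc k), 1:] * (\<Prod>i=0..<Suc k. [:-a i, 1:])"
    by (simp add: mult.commute)
  then show ?case using Suc m by (simp add: coeff_lin_mult)
qed

lemma char_poly_coeff_trace:
  fixes M :: "'a::comm_ring_1 mat"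
  assumes M: "M \<in> carrier_mat n n" and n: "n \<ge> 1"
  shows "coeff (char_poly M) (n - 1) = - mat_trace M"
proof -
  define C where "C = char_poly_matrix M"
  have C: "C \<in> carrier_mat n n" using M unfolding C_def by simp
  have Cij: "C $$ (i,j) = (if i = j then [:0,1:] else 0) + [:-M$$(i,j):]" if "i < n" "j < n" for i j
    using M that unfolding C_def char_poly_matrix_def by auto
  define P where "P = {p. p permutes {0..<n}}"
  define f where "f p = signof p * (\<Prod>i = 0..<n. C $$ (i, p i))" for p
  have cp: "char_poly M = (\<Sum>p\<in>P. f p)"
    unfolding char_poly_def C_def[symmetric] det_def'[OF C] P_def f_def by simp
  have finP: "finite P" unfolding P_def by (simp add: finite_permutations)
  have idP: "id \<in> P" unfolding P_def by (simp add: permutes_id)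
  have rest: "coeff (f p) (n - 1) = 0" if p: "p \<in> P - {id}" for p
  proof -
    from p have pp: "p permutes {0..<n}" and pid: "p \<noteq> id" unfolding P_def by auto
    then obtain i where i: "i < n" and pi: "p i \<noteq> i"
      by (metis atLeastLessThan_iff order_refl permutes_natset_le)
    define j where "j = p i"
    have j: "j < n" unfolding j_def using permutes_in_image[OF pp, of i] i by simp
    have pj: "p j \<noteq> j"
    proof
      assume "p j = j"
      then have "p j = p i" unfolding j_def by simp
      then have "j = i" using permutes_inj[OF pp] by (meson injD)
      then show False using pi unfolding j_def by simp
    qed
    have ij: "i \<noteq> j" using pi unfolding j_def by simp
    let ?d = "\<lambda>l. degree (C $$ (l, p l))"
    have pl: "p l < n" if "l < n" for l using permutes_in_image[OF pp, of l] that by simp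
    have d1: "?d l \<le> 1" if "l < n" for l
      using Cij[OF that pl[OF that]] by (auto simp: degree_add_le)
    have d0: "?d l = 0" if "l < n" "p l \<noteq> l" for l
      using Cij[OF that(1) pl[OF that(1)]] that by auto
    have "degree (\<Prod>l = 0..<n. C $$ (l, p l)) \<le> (\<Sum>l = 0..<n. ?d l)"
      using degree_prod_sum_le[of "{0..<n}" "\<lambda>l. C $$ (l, p l)"] by (simp add: o_def)
    also have "(\<Sum>l = 0..<n. ?d l) = (\<Sum>l \<in> {0..<n} - {i,j}. ?d l)"
      by (rule sum.mono_neutral_right) (use i j d0 pi pj in auto)
    also have "\<dots> \<le> (\<Sum>l \<in> {0..<n} - {i,j}. 1)"
      by (rule sum_mono) (use d1 in auto)
    also have "\<dots> = n - 2" using i j ij by simp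
    finally have "degree (f p) \<le> n - 2" unfolding f_def by simp
    moreover have "n - 2 < n - 1" using i j ij by linarith
    ultimately show ?thesis by (simp add: coeff_eq_0)
  qed
  have "coeff (char_poly M) (n - 1) = coeff (f id) (n - 1) + (\<Sum>p\<in>P - {id}. coeff (f p) (n - 1))"
    unfolding cp coeff_sum using sum.remove[OF finP idP] by simp
  also have "(\<Sum>p\<in>P - {id}. coeff (f p) (n - 1)) = 0" using rest by simp
  also have "f id = (\<Prod>i = 0..<n. [:- M $$ (i,i), 1:])"
    unfolding f_def by (auto simp: Cij intro!: prod.cong)
  also obtain k where k: "n = Suc k" using n by (cases n) auto
  also have "coeff (\<Prod>i = 0..<Suc k. [:- M $$ (i,i), 1:]) (Suc k - 1) = - mat_trace M"
    using prod_lin_coeff[of "\<lambda>i. M $$ (i,i)" k] M k unfolding mat_trace_def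
    by (simp add: atLeast0LessThan)
  finally show ?thesis using k by simp
qed

lemma split_poly:
  fixes p :: "'a::idom poly"
  shows "p \<noteq> 0 \<Longrightarrow> size (proots p) = degree p \<Longrightarrow> p = Polynomial.smult (lead_coeff p) (\<Prod>x\<in>#proots p. [:-x,1:])"
proof (induction "degree p" arbitrary: p)
  case 0
  then have "proots p = {#}" by simp
  moreover have "Polynomial.smult (lead_coeff p) 1 = [:coeff p 0:]" using 0(1)[symmetric] by (simp add: one_pCons)
  ultimately show ?case using degree_0_id[OF 0(1)[symmetric]] by simp
next
  case (Suc d p)
  then have "proots p \<noteq> {#}" by auto
  then obtain a where a: "a \<in># proots p" by blast
  then have "poly p a = 0" using Suc.prems by simp
  then obtain q where q: "p = [:-a,1:] * q" using poly_eq_0_iff_dvd by (metis dvdE)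
  have q0: "q \<noteq> 0" using q Suc.prems by auto
  have l0: "[:-a,1:] \<noteq> 0" by simp
  have pr: "proots p = add_mset a (proots q)"
    using proots_mult[OF l0 q0] q by simp
  have dq: "degree p = Suc (degree q)" unfolding q using degree_mult_eq[OF l0 q0] by simp
  have lc: "lead_coeff p = lead_coeff q" unfolding q lead_coeff_mult[of "[:-a,1:]" q] by simp
  have IH: "q = Polynomial.smult (lead_coeff q) (\<Prod>x\<in>#proots q. [:-x,1:])"
    using Suc.hyps(1)[of q] Suc.hyps(2) Suc.prems dq q0 pr by simp
  have "p = [:-a,1:] * Polynomial.smult (lead_coeff q) (\<Prod>x\<in>#proots q. [:-x,1:])"
    using q IH by metis
  also have "\<dots> = Polynomial.smult (lead_coeff p) (\<Prod>x\<in>#proots p. [:-x,1:])"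
    using pr lc by (simp add: mult_ac)
  finally show ?case .
qed

definition good :: "real poly \<Rightarrow> nat \<Rightarrow> bool" where
  "good g m \<longleftrightarrow> (\<forall>t. 0 \<le> coeff g t) \<and> (\<forall>t>m. coeff g t = 0) \<and> (\<forall>t\<le>m. 0 < coeff g t)
     \<and> coeff g m = 1
     \<and> (\<forall>t. 1 \<le> t \<and> t \<le> m \<longrightarrow> coeff g (t-1) \<le> coeff g (m-1) * coeff g t)
     \<and> (\<forall>t. 1 \<le> t \<and> t < m \<longrightarrow> coeff g (t-1) < coeff g (m-1) * coeff g t)"

lemma good_base: "(q::real) > 0 \<Longrightarrow> good [:q,1:] 1"
  unfolding good_def by (auto simp: coeff_pCons split: nat.splits)

lemma good_step:
  assumes g: "good g m" and m: "m \<ge> 1" and q: "(q::real) > 0"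
  shows "good ([:q,1:] * g) (Suc m)"
proof -
  define c where "c = coeff g"
  define S where "S = c (m - 1)"
  have c': "coeff ([:q,1:] * g) t = q * c t + (case t of 0 \<Rightarrow> 0 | Suc j \<Rightarrow> c j)" for t
    unfolding c_def by (rule coeff_lin_mult)
  have nn: "0 \<le> c t" for t using g unfolding good_def c_def by auto
  have z: "c t = 0" if "t > m" for t using g that unfolding good_def c_def by auto
  have pos: "0 < c t" if "t \<le> m" for t using g that unfolding good_def c_def by auto
  have mon: "c m = 1" using g unfolding good_def c_def by auto
  have le: "c (t-1) \<le> S * c t" if "1 \<le> t" "t \<le> m" for t using g that unfolding good_def c_def S_def by auto
  have S0: "0 \<le> S" unfolding S_def by (rule nn)
  have S': "coeff ([:q,1:] * g) (Suc m - 1) = q + S"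
    using m mon unfolding c' S_def by (cases m) auto
  have A: "\<forall>t. 0 \<le> coeff ([:q,1:] * g) t"
    unfolding c' using nn q by (auto split: nat.splits)
  have B: "\<forall>t>Suc m. coeff ([:q,1:] * g) t = 0"
    unfolding c' using z by (auto split: nat.splits)
  have C: "\<forall>t\<le>Suc m. 0 < coeff ([:q,1:] * g) t"
  proof (intro allI impI)
    fix t assume t: "t \<le> Suc m"
    show "0 < coeff ([:q,1:] * g) t"
    proof (cases t)
      case 0 then show ?thesis unfolding c' using pos[of 0] q by simp
    next
      case (Suc j) then show ?thesis unfolding c' using pos[of j] t nn[of t] q
        by simp (meson add_nonneg_pos mult_nonneg_nonneg less_imp_le)
    qed
  qed
  have D: "coeff ([:q,1:] * g) (Suc m) = 1" unfolding c' using z[of "Suc m"] mon by simp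
  have key: "coeff ([:q,1:] * g) (t-1) \<le> (q + S) * coeff ([:q,1:] * g) t
     \<and> (t < Suc m \<longrightarrow> coeff ([:q,1:] * g) (t-1) < (q + S) * coeff ([:q,1:] * g) t)"
    if t: "1 \<le> t" "t \<le> Suc m" for t
  proof -
    obtain j where j: "t = Suc j" using t by (cases t) auto
    have jm: "j \<le> m" using t j by simp
    define e where "e = (case j of 0 \<Rightarrow> 0 | Suc i \<Rightarrow> c i)"
    have lhs: "coeff ([:q,1:] * g) (t-1) = q * c j + e" unfolding j e_def c' by simp
    have rhs: "(q + S) * coeff ([:q,1:] * g) t = q*q*c t + q * c j + S*q*c t + S * c j"
      unfolding j c' by (simp add: algebra_simps)
    have e: "e \<le> S * c j"
    proof (cases j)
      case 0 then show ?thesis unfolding e_def using S0 nn[of j] by simp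
    next
      case (Suc i) then show ?thesis unfolding e_def using le[of j] jm by simp
    qed
    have p1: "0 \<le> q*q*c t" using q nn[of t] by simp
    have p2: "0 \<le> S*q*c t" using q nn[of t] S0 by simp
    have p3: "t < Suc m \<longrightarrow> 0 < q*q*c t" using q pos[of t] by simp
    show ?thesis unfolding lhs rhs using e p1 p2 p3 by auto
  qed
  show ?thesis unfolding good_def using A B C D key S' by auto
qed

lemma good_prod:
  fixes N :: "real multiset"
  shows "N \<noteq> {#} \<Longrightarrow> (\<forall>x\<in>#N. x < 0) \<Longrightarrow> good (\<Prod>x\<in>#N. [:-x,1:]) (size N)"
proof (induction N)
  case empty then show ?case by simp
next
  case (add x N)
  show ?case
  proof (cases "N = {#}")
    case True then show ?thesis using good_base[of "-x"] add.prems by simp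
  next
    case False
    then have "good (\<Prod>x\<in>#N. [:-x,1:]) (size N)" using add by simp
    moreover have "size N \<ge> 1" using False by (simp add: Suc_le_eq nonempty_has_size)
    ultimately show ?thesis using good_step[of _ "size N" "-x"] add.prems by simp
  qed
qed

theorem theorem2p2:
  fixes M :: "real mat" and n r :: nat
  assumes "M \<in> carrier_mat n n"
    and "transpose_mat M = M"
    and "mat_trace M \<ge> 0"
    and "2 \<le> r" and "r \<le> n"
    and "size (filter_mset (\<lambda>x. x > 0) (proots (char_poly M))) = 1"
    and "size (filter_mset (\<lambda>x. x < 0) (proots (char_poly M))) = r - 1"
    and "count (proots (char_poly M)) 0 = n - r"
  shows "(mat_trace M = 0 \<longrightarrow> (\<forall>k. n - r \<le> k \<and> k \<le> n - 2 \<longrightarrow> coeff (char_poly M) k < 0))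
       \<and> (mat_trace M > 0 \<longrightarrow> (\<forall>k. n - r \<le> k \<and> k \<le> n - 1 \<longrightarrow> coeff (char_poly M) k < 0))"
proof -
  note Mc = assms(1)
  define cp where "cp = char_poly M"
  define P where "P = proots cp"
  define N where "N = filter_mset (\<lambda>x. x < 0) P"
  define m where "m = r - 1"
  have dm: "degree cp = n" and mon: "coeff cp n = 1"
    using degree_monic_char_poly[OF Mc] unfolding cp_def by auto
  have cp0: "cp \<noteq> 0" using mon by auto
  obtain p where pf: "filter_mset (\<lambda>x. x > 0) P = {#p#}"
    using size_1_singleton_mset[OF assms(6)[folded cp_def, folded P_def]] by blast
  have p0: "p > 0"
    by (metis pf multiset_partition union_single_eq_member mem_Collect_eq set_mset_filter singletonI set_mset_single)
  have sN: "size N = m" using assms(7) unfolding N_def m_def P_def cp_def .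
  have decomp: "P = {#p#} + N + replicate_mset (n - r) 0"
  proof -
    have "P = filter_mset (\<lambda>x. x > 0) P + filter_mset (\<lambda>x. x < 0) P + filter_mset (\<lambda>x. x = 0) P"
      by (rule multiset_eqI) auto
    then show ?thesis unfolding pf N_def filter_eq_replicate_mset
      using assms(8) unfolding P_def cp_def by simp
  qed
  have sP: "size P = degree cp" using decomp sN dm assms(4,5) unfolding m_def by simp
  have lc: "lead_coeff cp = 1" using dm mon by simp
  define g where "g = (\<Prod>x\<in>#N. [:-x,1:])"
  define h where "h = [:-p,1:] * g"
  have cpf: "cp = monom 1 (n - r) * h"
  proof -
    have "cp = (\<Prod>x\<in>#P. [:-x,1:])" using split_poly[OF cp0 sP[unfolded P_def]] lc unfolding P_def by simp
    also have "\<dots> = [:-p,1:] * g * [:0,1:] ^ (n - r)" unfolding decomp g_def by (simp del: mult_pCons_left mult_pCons_right add: mult_ac)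
    also have "\<dots> = monom 1 (n - r) * h" unfolding h_def monom_altdef by (simp add: mult_ac)
    finally show ?thesis .
  qed
  have Nne: "N \<noteq> {#}" using sN assms(4) unfolding m_def by auto
  have good: "good g m" unfolding g_def sN[symmetric] by (rule good_prod[OF Nne]) (auto simp: N_def)
  define c where "c = coeff g"
  define S where "S = c (m - 1)"
  have m1: "m \<ge> 1" using assms(4) unfolding m_def by simp
  have pos: "0 < c t" if "t \<le> m" for t using good that unfolding good_def c_def by auto
  have cm: "c m = 1" using good unfolding good_def c_def by auto
  have strict: "c (t-1) < S * c t" if "1 \<le> t" "t < m" for t using good that unfolding good_def c_def S_def by auto
  have ch: "coeff h t = -p * c t + (case t of 0 \<Rightarrow> 0 | Suc j \<Rightarrow> c j)" for t
    unfolding h_def c_def by (rule coeff_lin_mult)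
  have ccp: "coeff cp (n - r + t) = coeff h t" for t unfolding cpf coeff_monom_mult by simp
  have tr: "mat_trace M = p - S"
  proof -
    have "coeff cp (n - 1) = - mat_trace M" unfolding cp_def
      by (rule char_poly_coeff_trace[OF Mc]) (use assms(4,5) in simp)
    moreover have "n - 1 = n - r + m" using assms(4,5) unfolding m_def by simp
    moreover have "coeff h m = S - p" unfolding ch S_def using cm m1 by (cases m) auto
    ultimately show ?thesis using ccp by simp
  qed
  have Sp: "S \<le> p" using tr assms(3) by simp
  have neg: "coeff h t < 0" if "t < m \<or> (t = m \<and> mat_trace M > 0)" for t
  proof (cases t)
    case 0 then show ?thesis unfolding ch using pos[of 0] p0 by simp
  next
    case (Suc j)
    show ?thesis
    proof (cases "t < m")
      case True
      have "c j < S * c t" using strict[of t] True Suc by simp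
      also have "S * c t \<le> p * c t" using Sp pos[of t] True by (simp add: mult_right_mono)
      finally show ?thesis unfolding ch Suc by simp
    next
      case False
      have tm: "t = m \<and> mat_trace M > 0" using that False by blast
      then have "t = m" "mat_trace M > 0" by blast+
      then have "S < p" using tr by simp
      have tj: "Suc j = m" using Suc \<open>t = m\<close> by simp
      have cj: "c j = S" unfolding S_def using tj by (metis diff_Suc_1)
      have c1: "c (Suc j) = 1" using cm tj by simp
      show ?thesis unfolding ch Suc using \<open>S < p\<close> cj c1 by simp
    qed
  qed
  have main: "coeff cp k < 0" if k1: "n - r \<le> k" and k2: "k < n - 1 \<or> (k = n - 1 \<and> mat_trace M > 0)" for k
  proof -
    define t where "t = k - (n - r)"
    have t: "k = n - r + t" using k1 unfolding t_def by simp
    consider "k < n - 1" | "k = n - 1" "mat_trace M > 0" using k2 by blast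
    then have "t < m \<or> (t = m \<and> mat_trace M > 0)"
    proof cases
      case 1 then show ?thesis using t assms(4,5) unfolding m_def by linarith
    next
      case 2
      then have "t = m" using t assms(4,5) unfolding m_def by linarith
      then show ?thesis using 2 by blast
    qed
    then have "coeff h t < 0" by (rule neg)
    then show ?thesis using ccp[of t] t by simp
  qed
  show ?thesis unfolding cp_def[symmetric]
  proof (intro conjI impI allI)
    fix k assume "mat_trace M = 0" "n - r \<le> k \<and> k \<le> n - 2"
    then have "n - r \<le> k" "k < n - 1" using assms(4,5) by linarith+
    then show "coeff cp k < 0" using main[of k] by blast
  next
    fix k assume "mat_trace M > 0" "n - r \<le> k \<and> k \<le> n - 1"
    then have "n - r \<le> k" "k < n - 1 \<or> (k = n - 1 \<and> mat_trace M > 0)" by auto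
    then show "coeff cp k < 0" by (rule main)
  qed
qed

end
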